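(* Let $n,d\ge1$, $a,p\ge 0$, $s>0$, $r>0$, $K\ge 1$ integer, and let $S^c\subset\mathbb Z^d$. Consider a Hamiltonian, independent of $y$, of the form $$Q(x,w)=\sum_{\nu\in\mathbb Z^n,\ |\nu|_1\le K}\ \sum_{\alpha,\beta:\ |\alpha|+|\beta|\ge 1}e^{i\nu\cdot x}Q_{\nu,\alpha,\beta}z^\alpha\bar z^\beta,$$ in the variables $x\in\mathbb T^n_{\mathbb C}$ and $w=(z,\bar z)=(z_k,\bar z_k)_{k\in S^c}$ (so $Q$ has degree at least one in $w$ and is a trigonometric polynomial of degree $\le K$ in $x$). Write its Hamiltonian vector field as $X_Q=X_Q^{(y)}+X_Q^{(w)}$ with $$X_Q^{(y)}=\partial_xQ(x,w)\cdot\partial_y,\qquad X_Q^{(w)}=-i\,\partial_zQ(x,w)\cdot\partial_{\bar z}+i\,\partial_{\bar z}Q(x,w)\cdot\partial_z .$$ Then $$\|X_Q^{(y)}\|_{s,r}\le K\,\|X_Q^{(w)}\|_{s,r}.$$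
   Context: $\ell^{(a,p)}$ denotes the space of sequences $u=(u_k)_{k\in S^c}$ with $\|u\|_{a,p}^2=|u_0|^2+\sum_{k}|u_k|^2e^{2a|k|}|k|^{2p}<\infty$ ($|k|$ the Euclidean norm); $|\cdot|_1$ on $\mathbb Z^n$ or $\mathbb C^n$ is the $\ell^1$ norm and $|\cdot|_\infty$ the max norm. $\mathbb T^n_s=\{x\in\mathbb C^n/2\pi\mathbb Z^n:\ |\mathrm{Im}\,x|\le s\}$ and $D(s,r)=\{(x,y,w):\ x\in\mathbb T^n_s,\ |y|_1\le r^2,\ \|w\|_{a,p}\le r\}$, with $w=(z,\bar z)\in\ell^{(a,p)}\times\ell^{(a,p)}$. On $V=\mathbb C^n\times\mathbb C^n\times\ell^{(a,p)}\times\ell^{(a,p)}$ put $\|(x,y,z,\bar z)\|_{V,s,r}=\frac{|x|_\infty}{s}+\frac{|y|_1}{r^2}+\frac{\|z\|_{a,p}}{r}+\frac{\|\bar z\|_{a,p}}{r}$. For a vector field with formal expansion $X=\sum_{\nu,i,\alpha,\beta}X^{(\mathtt v)}_{\nu,i,\alpha,\beta}e^{i\nu\cdot x}y^iz^\alpha\bar z^\beta\partial_{\mathtt v}$ ($\mathtt v=x,y,z,\bar z$), its majorant is $MX=\sum|X^{(\mathtt v)}_{\nu,i,\alpha,\beta}|e^{s|\nu|_1}y^iz^\alpha\bar z^\beta\partial_{\mathtt v}$ and its norm is $\|X\|_{s,r}=\sup_{(y,z,\bar z)\in D(s,r)}\|MX\|_{V,s,r}$. *)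

theory Defs
  imports "HOL-Analysis.Analysis"
begin

text \<open>Lattice sites k in Z^d are functions 'd => int ('d a finite type, d = CARD('d));
  Fourier modes nu in Z^n are functions 'n => int ('n finite, n = CARD('n)).\<close>

type_synonym 'd site = "'d \<Rightarrow> int"
type_synonym 'd mindex = "'d site \<Rightarrow> nat"

definition knorm :: "'d::finite site \<Rightarrow> real" where
  "knorm k = sqrt (\<Sum>i\<in>UNIV. (real_of_int (k i))\<^sup>2)"

definition l1int :: "('n::finite \<Rightarrow> int) \<Rightarrow> real" where
  "l1int \<nu> = (\<Sum>j\<in>UNIV. \<bar>real_of_int (\<nu> j)\<bar>)"

definition pow0 :: "real \<Rightarrow> real \<Rightarrow> real" where
  "pow0 x e = (if x = 0 then (if e = 0 then 1 else 0) else x powr e)"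

text \<open>Weight of site k in the squared (a,p)-norm: |u_0|^2 + sum_k |u_k|^2 e^{2a|k|} |k|^{2p}.\<close>
definition lweight :: "real \<Rightarrow> real \<Rightarrow> 'd::finite site \<Rightarrow> real" where
  "lweight a p k = (if (\<forall>i. k i = 0) then 1 else 0) + exp (2 * a * knorm k) * pow0 (knorm k) (2 * p)"

definition ennsqrt :: "ennreal \<Rightarrow> ennreal" where
  "ennsqrt x = (if x = \<infinity> then \<infinity> else ennreal (sqrt (enn2real x)))"

text \<open>The (a,p)-norm of a (nonnegative) sequence indexed by S^c (value \<infinity> if not in the space).\<close>
definition lnorm :: "real \<Rightarrow> real \<Rightarrow> 'd::finite site set \<Rightarrow> ('d site \<Rightarrow> ennreal) \<Rightarrow> ennreal" where
  "lnorm a p Sc u = ennsqrt (\<Sum>\<^sub>\<infinity>k\<in>Sc. (u k)\<^sup>2 * ennreal (lweight a p k))"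

definition MI :: "'d site set \<Rightarrow> 'd mindex set" where
  "MI Sc = {\<alpha>. finite {k. \<alpha> k \<noteq> 0} \<and> {k. \<alpha> k \<noteq> 0} \<subseteq> Sc}"

definition mdeg :: "'d mindex \<Rightarrow> nat" where
  "mdeg \<alpha> = (\<Sum>k\<in>{k. \<alpha> k \<noteq> 0}. \<alpha> k)"

definition mono_abs :: "('d site \<Rightarrow> complex) \<Rightarrow> 'd mindex \<Rightarrow> real" where
  "mono_abs z \<alpha> = (\<Prod>k\<in>{k. \<alpha> k \<noteq> 0}. cmod (z k) ^ \<alpha> k)"

definition ymono_abs :: "('n::finite \<Rightarrow> complex) \<Rightarrow> ('n \<Rightarrow> nat) \<Rightarrow> real" where
  "ymono_abs y i = (\<Prod>j\<in>UNIV. cmod (y j) ^ i j)"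

text \<open>Coefficient array of one component of a vector field:
  X_{nu,i,alpha,beta} for the monomial e^{i nu.x} y^i z^alpha zbar^beta.\<close>
type_synonym ('n, 'd) coeffs = "('n \<Rightarrow> int) \<Rightarrow> ('n \<Rightarrow> nat) \<Rightarrow> 'd mindex \<Rightarrow> 'd mindex \<Rightarrow> complex"

record ('n, 'd) vfield =
  vx  :: "'n \<Rightarrow> ('n, 'd) coeffs"
  vy  :: "'n \<Rightarrow> ('n, 'd) coeffs"
  vz  :: "'d site \<Rightarrow> ('n, 'd) coeffs"
  vzb :: "'d site \<Rightarrow> ('n, 'd) coeffs"

definition maj_eval :: "real \<Rightarrow> 'd::finite site set \<Rightarrow> ('n::finite, 'd) coeffs \<Rightarrow>
    ('n \<Rightarrow> complex) \<Rightarrow> ('d site \<Rightarrow> complex) \<Rightarrow> ('d site \<Rightarrow> complex) \<Rightarrow> ennreal" where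
  "maj_eval s Sc c y z zb =
     (\<Sum>\<^sub>\<infinity>(\<nu>, i, \<alpha>, \<beta>)\<in>UNIV \<times> UNIV \<times> MI Sc \<times> MI Sc.
        ennreal (cmod (c \<nu> i \<alpha> \<beta>) * exp (s * l1int \<nu>) * ymono_abs y i * mono_abs z \<alpha> * mono_abs zb \<beta>))"

definition Dom :: "real \<Rightarrow> real \<Rightarrow> real \<Rightarrow> 'd::finite site set \<Rightarrow>
    (('n::finite \<Rightarrow> complex) \<times> ('d site \<Rightarrow> complex) \<times> ('d site \<Rightarrow> complex)) set" where
  "Dom a p r Sc = {(y, z, zb). (\<Sum>j\<in>UNIV. cmod (y j)) \<le> r\<^sup>2
      \<and> lnorm a p Sc (\<lambda>k. ennreal (cmod (z k))) \<le> ennreal r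
      \<and> lnorm a p Sc (\<lambda>k. ennreal (cmod (zb k))) \<le> ennreal r}"

definition vf_norm :: "real \<Rightarrow> real \<Rightarrow> real \<Rightarrow> real \<Rightarrow> 'd::finite site set \<Rightarrow>
    ('n::finite, 'd) vfield \<Rightarrow> ennreal" where
  "vf_norm a p s r Sc X =
     (SUP (y, z, zb)\<in>Dom a p r Sc.
        (SUP j. maj_eval s Sc (vx X j) y z zb) * ennreal (1 / s)
      + (\<Sum>j\<in>UNIV. maj_eval s Sc (vy X j) y z zb) * ennreal (1 / r\<^sup>2)
      + lnorm a p Sc (\<lambda>k. maj_eval s Sc (vz X k) y z zb) * ennreal (1 / r)
      + lnorm a p Sc (\<lambda>k. maj_eval s Sc (vzb X k) y z zb) * ennreal (1 / r))"

text \<open>For the y-independent Hamiltonian Q = sum q_{nu,alpha,beta} e^{i nu.x} z^alpha zbar^beta: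
  X_Q^(y) = d_x Q . d_y.\<close>
definition XQ_y :: "(('n::finite \<Rightarrow> int) \<Rightarrow> 'd mindex \<Rightarrow> 'd mindex \<Rightarrow> complex) \<Rightarrow> ('n, 'd) vfield" where
  "XQ_y q = \<lparr> vx = (\<lambda>j \<nu> i \<alpha> \<beta>. 0),
              vy = (\<lambda>j \<nu> i \<alpha> \<beta>. if i = (\<lambda>_. 0) then \<i> * of_int (\<nu> j) * q \<nu> \<alpha> \<beta> else 0),
              vz = (\<lambda>k \<nu> i \<alpha> \<beta>. 0),
              vzb = (\<lambda>k \<nu> i \<alpha> \<beta>. 0) \<rparr>"

text \<open>X_Q^(w) = -i d_z Q . d_zbar + i d_zbar Q . d_z.\<close>
definition XQ_w :: "(('n::finite \<Rightarrow> int) \<Rightarrow> 'd mindex \<Rightarrow> 'd mindex \<Rightarrow> complex) \<Rightarrow> ('n, 'd) vfield" where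
  "XQ_w q = \<lparr> vx = (\<lambda>j \<nu> i \<alpha> \<beta>. 0),
              vy = (\<lambda>j \<nu> i \<alpha> \<beta>. 0),
              vz = (\<lambda>k \<nu> i \<alpha> \<beta>. if i = (\<lambda>_. 0)
                      then \<i> * of_nat (\<beta> k + 1) * q \<nu> \<alpha> (\<beta>(k := \<beta> k + 1)) else 0),
              vzb = (\<lambda>k \<nu> i \<alpha> \<beta>. if i = (\<lambda>_. 0)
                      then - \<i> * of_nat (\<alpha> k + 1) * q \<nu> (\<alpha>(k := \<alpha> k + 1)) \<beta> else 0) \<rparr>"

end

theory Submission
  imports Defs
begin
lemma enn_summable[simp]: "(f::'a \<Rightarrow> ennreal) summable_on A"
  by (rule nonneg_summable_on_complete) simp
lemma enn_infsum_subset: fixes f :: "_ \<Rightarrow> ennreal"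
  assumes "S \<subseteq> T" shows "infsum f S \<le> infsum f T"
  by (rule infsum_mono_neutral) (use assms in auto)

lemma ennSigma_fin: fixes f :: "_ \<Rightarrow> ennreal"
  assumes "finite G"
  shows "infsum f (Sigma G B) = (\<Sum>x\<in>G. infsum (\<lambda>y. f (x, y)) (B x))"
  using assms
proof (induction G rule: finite_induct)
  case empty
  then show ?case by simp
next
  case (insert a G)
  have eq: "Sigma (insert a G) B = Sigma {a} B \<union> Sigma G B" by auto
  have dj: "Sigma {a} B \<inter> Sigma G B = {}" using insert by auto
  have s1: "Sigma {a} B = Pair a ` B a" by auto
  have "infsum f (Sigma {a} B) = infsum (\<lambda>y. f (a, y)) (B a)"
    unfolding s1 by (subst infsum_reindex) (auto simp: inj_on_def o_def)
  then show ?case using insert eq dj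
    by (simp add: infsum_Un_disjoint)
qed

lemma ennSigma: fixes f :: "_ \<Rightarrow> ennreal"
  shows "infsum f (Sigma A B) = infsum (\<lambda>x. infsum (\<lambda>y. f (x, y)) (B x)) A"
proof (rule antisym)
  show "infsum f (Sigma A B) \<le> infsum (\<lambda>x. infsum (\<lambda>y. f (x, y)) (B x)) A"
  proof (rule infsum_le_finite_sums)
    fix F assume F: "finite F" "F \<subseteq> Sigma A B"
    have "sum f F = infsum f F" using F by simp
    also have "\<dots> \<le> infsum f (Sigma (fst ` F) B)"
      by (rule enn_infsum_subset) (use F in force)
    also have "\<dots> = (\<Sum>x\<in>fst ` F. infsum (\<lambda>y. f (x, y)) (B x))"
      using F by (simp add: ennSigma_fin)
    also have "\<dots> = infsum (\<lambda>x. infsum (\<lambda>y. f (x, y)) (B x)) (fst ` F)"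
      using F by simp
    also have "\<dots> \<le> infsum (\<lambda>x. infsum (\<lambda>y. f (x, y)) (B x)) A"
      by (rule enn_infsum_subset) (use F in force)
    finally show "sum f F \<le> infsum (\<lambda>x. infsum (\<lambda>y. f (x, y)) (B x)) A" .
  qed simp
next
  show "infsum (\<lambda>x. infsum (\<lambda>y. f (x, y)) (B x)) A \<le> infsum f (Sigma A B)"
  proof (rule infsum_le_finite_sums)
    fix G assume G: "finite G" "G \<subseteq> A"
    have "sum (\<lambda>x. infsum (\<lambda>y. f (x, y)) (B x)) G = infsum f (Sigma G B)"
      using G by (simp add: ennSigma_fin)
    also have "\<dots> \<le> infsum f (Sigma A B)"
      by (rule enn_infsum_subset) (use G in force)
    finally show "sum (\<lambda>x. infsum (\<lambda>y. f (x, y)) (B x)) G \<le> infsum f (Sigma A B)" .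
  qed simp
qed

lemma ennswap: fixes f :: "_ \<Rightarrow> _ \<Rightarrow> ennreal"
  shows "infsum (\<lambda>x. infsum (f x) B) A = infsum (\<lambda>y. infsum (\<lambda>x. f x y) A) B"
proof -
  have "infsum (\<lambda>x. infsum (f x) B) A = infsum (\<lambda>(x,y). f x y) (A \<times> B)"
    by (simp add: ennSigma)
  also have "\<dots> = infsum (\<lambda>(y,x). f x y) (B \<times> A)"
    by (rule infsum_reindex_bij_witness[of _ prod.swap prod.swap]) auto
  also have "\<dots> = infsum (\<lambda>y. infsum (\<lambda>x. f x y) A) B"
    by (simp add: ennSigma)
  finally show ?thesis .
qed

lemma enn_infsum_sum: fixes f :: "_ \<Rightarrow> _ \<Rightarrow> ennreal"
  assumes "finite J"
  shows "infsum (\<lambda>x. \<Sum>j\<in>J. f j x) A = (\<Sum>j\<in>J. infsum (f j) A)"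
  using assms by (induction J rule: finite_induct) (simp_all add: infsum_add[OF enn_summable enn_summable])

lemma enn_infsum_cmult: fixes f :: "_ \<Rightarrow> ennreal"
  shows "infsum (\<lambda>x. c * f x) A = c * infsum f A"
proof -
  have "infsum (\<lambda>x. c * f x) A = (SUP F\<in>{F. finite F \<and> F\<subseteq>A}. sum (\<lambda>x. c * f x) F)"
    by (rule nonneg_infsum_complete) simp
  also have "\<dots> = (SUP F\<in>{F. finite F \<and> F\<subseteq>A}. c * sum f F)"
    by (simp add: sum_distrib_left)
  also have "\<dots> = c * (SUP F\<in>{F. finite F \<and> F\<subseteq>A}. sum f F)"
    by (simp add: SUP_mult_left_ennreal)
  also have "\<dots> = c * infsum f A"
    by (subst nonneg_infsum_complete) simp_all
  finally show ?thesis .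
qed

lemma enn_infsum_mono: fixes f :: "_ \<Rightarrow> ennreal"
  shows "(\<And>x. x \<in> A \<Longrightarrow> f x \<le> g x) \<Longrightarrow> infsum f A \<le> infsum g A"
  by (rule infsum_mono) (auto intro: enn_summable)

lemma enn_term_le: fixes f :: "_ \<Rightarrow> ennreal"
  assumes "x \<in> A" shows "f x \<le> infsum f A"
proof -
  have "infsum f {x} \<le> infsum f A"
    by (rule infsum_mono_neutral) (use assms in \<open>auto intro: enn_summable\<close>)
  then show ?thesis by simp
qed

lemma mono_abs_superset:
  assumes "finite F" "{k. \<alpha> k \<noteq> 0} \<subseteq> F"
  shows "mono_abs u \<alpha> = (\<Prod>k\<in>F. cmod (u k) ^ \<alpha> k)"
  unfolding mono_abs_def by (rule prod.mono_neutral_left) (use assms in auto)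

lemma mono_abs_incr:
  assumes "finite {k. \<beta> k \<noteq> 0}"
  shows "mono_abs u (\<beta>(k := \<beta> k + 1)) = cmod (u k) * mono_abs u \<beta>"
proof -
  define F where "F = insert k {k. \<beta> k \<noteq> 0}"
  have fF: "finite F" using assms F_def by simp
  have kF: "k \<in> F" by (simp add: F_def)
  have sub1: "{j. (\<beta>(k := \<beta> k + 1)) j \<noteq> 0} \<subseteq> F" by (auto simp: F_def)
  have sub2: "{j. \<beta> j \<noteq> 0} \<subseteq> F" by (auto simp: F_def)
  have c: "(\<Prod>j\<in>F-{k}. cmod (u j) ^ (\<beta>(k := \<beta> k + 1)) j) = (\<Prod>j\<in>F-{k}. cmod (u j) ^ \<beta> j)"
    by (rule prod.cong) auto
  have "mono_abs u (\<beta>(k := \<beta> k + 1)) = (\<Prod>j\<in>F. cmod (u j) ^ (\<beta>(k := \<beta> k + 1)) j)"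
    by (rule mono_abs_superset[OF fF sub1])
  also have "\<dots> = cmod (u k) ^ (\<beta> k + 1) * (\<Prod>j\<in>F-{k}. cmod (u j) ^ \<beta> j)"
    by (subst prod.remove[OF fF kF]) (simp add: c)
  also have "\<dots> = cmod (u k) * (cmod (u k) ^ \<beta> k * (\<Prod>j\<in>F-{k}. cmod (u j) ^ \<beta> j))"
    by simp
  also have "cmod (u k) ^ \<beta> k * (\<Prod>j\<in>F-{k}. cmod (u j) ^ \<beta> j) = (\<Prod>j\<in>F. cmod (u j) ^ \<beta> j)"
    by (rule prod.remove[OF fF kF, symmetric])
  also have "\<dots> = mono_abs u \<beta>"
    by (rule mono_abs_superset[OF fF sub2, symmetric])
  finally show ?thesis .
qed

lemma lweight_ge1:
  assumes "a \<ge> 0" "p \<ge> 0"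
  shows "lweight a p k \<ge> 1"
proof (cases "\<forall>i. k i = 0")
  case True
  then have "knorm k = 0" by (simp add: knorm_def)
  then show ?thesis using True by (simp add: lweight_def pow0_def)
next
  case False
  then obtain i where i: "k i \<noteq> 0" by auto
  have "1 \<le> (real_of_int (k i))\<^sup>2" using i
  proof -
    have h: "1 \<le> \<bar>real_of_int (k i)\<bar>" using i by linarith
    have "1 \<le> \<bar>real_of_int (k i)\<bar> ^ 2" using one_le_power[OF h, of 2] .
    then show ?thesis by simp
  qed
  also have "\<dots> \<le> (\<Sum>j\<in>UNIV. (real_of_int (k j))\<^sup>2)"
    by (rule member_le_sum) auto
  finally have kn: "knorm k \<ge> 1" unfolding knorm_def by simp
  have e: "exp (2 * a * knorm k) \<ge> 1" using assms kn by simp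
  have pw: "pow0 (knorm k) (2 * p) \<ge> 1" using kn assms
    by (simp add: pow0_def ge_one_powr_ge_zero)
  have "1 * 1 \<le> exp (2 * a * knorm k) * pow0 (knorm k) (2 * p)"
    by (rule mult_mono) (use e pw in auto)
  moreover have "lweight a p k = 0 + exp (2 * a * knorm k) * pow0 (knorm k) (2 * p)"
    unfolding lweight_def by (subst if_not_P[OF False]) (rule refl)
  ultimately show ?thesis by linarith
qed

lemma mono_abs_nonneg: "mono_abs u \<alpha> \<ge> 0"
  unfolding mono_abs_def by (rule prod_nonneg) simp

lemma MI_incr:
  assumes "\<beta> \<in> MI Sc" "k \<in> Sc"
  shows "\<beta>(k := \<beta> k + 1) \<in> MI Sc"
proof -
  have sub: "{j. (\<beta>(k := \<beta> k + 1)) j \<noteq> 0} \<subseteq> insert k {j. \<beta> j \<noteq> 0}" by auto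
  have f2: "finite (insert k {j. \<beta> j \<noteq> 0})" using assms by (simp add: MI_def)
  have fin: "finite {j. (\<beta>(k := \<beta> k + 1)) j \<noteq> 0}" by (rule finite_subset[OF sub f2])
  have sub': "{j. (\<beta>(k := \<beta> k + 1)) j \<noteq> 0} \<subseteq> Sc" using assms sub by (auto simp: MI_def)
  show ?thesis unfolding MI_def using fin sub' by simp
qed

lemma MI_decr:
  assumes "\<beta> \<in> MI Sc"
  shows "\<beta>(k := \<beta> k - 1) \<in> MI Sc"
proof -
  have sub: "{j. (\<beta>(k := \<beta> k - 1)) j \<noteq> 0} \<subseteq> {j. \<beta> j \<noteq> 0}" by auto
  have f2: "finite {j. \<beta> j \<noteq> 0}" using assms by (simp add: MI_def)
  have fin: "finite {j. (\<beta>(k := \<beta> k - 1)) j \<noteq> 0}" by (rule finite_subset[OF sub f2])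
  have sub': "{j. (\<beta>(k := \<beta> k - 1)) j \<noteq> 0} \<subseteq> Sc" using assms sub by (auto simp: MI_def)
  show ?thesis unfolding MI_def using fin sub' by simp
qed

lemma euler:
  fixes h :: "('d::finite site \<Rightarrow> nat) \<Rightarrow> ennreal" and u :: "'d site \<Rightarrow> complex"
  shows "infsum (\<lambda>k. ennreal (cmod (u k)) * infsum (\<lambda>\<beta>. of_nat (\<beta> k + 1) * ennreal (mono_abs u \<beta>) * h (\<beta>(k := \<beta> k + 1))) (MI Sc)) Sc
       = infsum (\<lambda>\<beta>. of_nat (mdeg \<beta>) * ennreal (mono_abs u \<beta>) * h \<beta>) (MI Sc)"
proof -
  let ?L = "infsum (\<lambda>k. ennreal (cmod (u k)) * infsum (\<lambda>\<beta>. of_nat (\<beta> k + 1) * ennreal (mono_abs u \<beta>) * h (\<beta>(k := \<beta> k + 1))) (MI Sc)) Sc"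
  have "?L = infsum (\<lambda>k. infsum (\<lambda>\<beta>. ennreal (cmod (u k)) * (of_nat (\<beta> k + 1) * ennreal (mono_abs u \<beta>) * h (\<beta>(k := \<beta> k + 1)))) (MI Sc)) Sc"
    by (simp add: enn_infsum_cmult)
  also have "\<dots> = infsum (\<lambda>(k,\<beta>). ennreal (cmod (u k)) * (of_nat (\<beta> k + 1) * ennreal (mono_abs u \<beta>) * h (\<beta>(k := \<beta> k + 1)))) (Sc \<times> MI Sc)"
    by (subst ennSigma) simp
  also have "\<dots> = infsum (\<lambda>(k,\<beta>). of_nat (\<beta> k) * ennreal (mono_abs u \<beta>) * h \<beta>) (Sigma Sc (\<lambda>k. {\<beta>\<in>MI Sc. \<beta> k \<noteq> 0}))"
  proof (rule infsum_reindex_bij_witness[of _ "\<lambda>(k,\<beta>). (k, \<beta>(k := \<beta> k - 1))" "\<lambda>(k,\<beta>). (k, \<beta>(k := \<beta> k + 1))"])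
    fix x assume x: "x \<in> Sc \<times> MI Sc"
    then obtain k \<beta> where kb: "x = (k, \<beta>)" "k \<in> Sc" "\<beta> \<in> MI Sc" by auto
    show "(\<lambda>(k,\<beta>). (k, \<beta>(k := \<beta> k - 1))) ((\<lambda>(k,\<beta>). (k, \<beta>(k := \<beta> k + 1))) x) = x"
      using kb by simp
    show "(\<lambda>(k,\<beta>). (k, \<beta>(k := \<beta> k + 1))) x \<in> Sigma Sc (\<lambda>k. {\<beta>\<in>MI Sc. \<beta> k \<noteq> 0})"
      using kb MI_incr[OF kb(3) kb(2)] by simp
    have fin: "finite {j. \<beta> j \<noteq> 0}" using kb by (simp add: MI_def)
    have m: "ennreal (mono_abs u (\<beta>(k := Suc (\<beta> k)))) = ennreal (cmod (u k)) * ennreal (mono_abs u \<beta>)"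
      using mono_abs_incr[OF fin, of u k] by (simp add: ennreal_mult mono_abs_nonneg)
    show "(\<lambda>(k,\<beta>). of_nat (\<beta> k) * ennreal (mono_abs u \<beta>) * h \<beta>) ((\<lambda>(k,\<beta>). (k, \<beta>(k := \<beta> k + 1))) x)
        = (\<lambda>(k,\<beta>). ennreal (cmod (u k)) * (of_nat (\<beta> k + 1) * ennreal (mono_abs u \<beta>) * h (\<beta>(k := \<beta> k + 1)))) x"
      using kb by (simp add: m mult_ac)
  next
    fix y assume y: "y \<in> Sigma Sc (\<lambda>k. {\<beta>\<in>MI Sc. \<beta> k \<noteq> 0})"
    then obtain k \<beta> where kb: "y = (k, \<beta>)" "k \<in> Sc" "\<beta> \<in> MI Sc" "\<beta> k \<noteq> 0" by auto
    show "(\<lambda>(k,\<beta>). (k, \<beta>(k := \<beta> k + 1))) ((\<lambda>(k,\<beta>). (k, \<beta>(k := \<beta> k - 1))) y) = y"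
      using kb by auto
    show "(\<lambda>(k,\<beta>). (k, \<beta>(k := \<beta> k - 1))) y \<in> Sc \<times> MI Sc"
      using kb MI_decr[OF kb(3)] by simp
  qed
  also have "\<dots> = infsum (\<lambda>(\<beta>,k). of_nat (\<beta> k) * ennreal (mono_abs u \<beta>) * h \<beta>) (Sigma (MI Sc) (\<lambda>\<beta>. {k\<in>Sc. \<beta> k \<noteq> 0}))"
    by (rule infsum_reindex_bij_witness[of _ prod.swap prod.swap]) auto
  also have "\<dots> = infsum (\<lambda>\<beta>. infsum (\<lambda>k. of_nat (\<beta> k) * ennreal (mono_abs u \<beta>) * h \<beta>) {k\<in>Sc. \<beta> k \<noteq> 0}) (MI Sc)"
    by (subst ennSigma) simp
  also have "\<dots> = infsum (\<lambda>\<beta>. of_nat (mdeg \<beta>) * ennreal (mono_abs u \<beta>) * h \<beta>) (MI Sc)"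
  proof (rule infsum_cong)
    fix \<beta> assume b: "\<beta> \<in> MI Sc"
    have eqs: "{k\<in>Sc. \<beta> k \<noteq> 0} = {k. \<beta> k \<noteq> 0}" using b by (auto simp: MI_def)
    have fin: "finite {k. \<beta> k \<noteq> 0}" using b by (simp add: MI_def)
    show "infsum (\<lambda>k. of_nat (\<beta> k) * ennreal (mono_abs u \<beta>) * h \<beta>) {k\<in>Sc. \<beta> k \<noteq> 0}
        = of_nat (mdeg \<beta>) * ennreal (mono_abs u \<beta>) * h \<beta>"
      unfolding eqs using fin by (simp add: mdeg_def sum_distrib_right of_nat_sum)
  qed
  finally show ?thesis .
qed


lemma amgm:
  fixes V :: "'d::finite site \<Rightarrow> ennreal" and u :: "'d site \<Rightarrow> complex"
  assumes "a \<ge> 0" "p \<ge> 0" "r > 0"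
    and un: "lnorm a p Sc (\<lambda>k. ennreal (cmod (u k))) \<le> ennreal r"
  shows "infsum (\<lambda>k. ennreal (cmod (u k)) * V k) Sc \<le> ennreal r * lnorm a p Sc V"
proof -
  define w :: "'d site \<Rightarrow> real" where "w = lweight a p"
  have w1: "w k \<ge> 1" for k using lweight_ge1[OF assms(1,2)] by (simp add: w_def)
  define Su where "Su = infsum (\<lambda>k. (ennreal (cmod (u k)))\<^sup>2 * ennreal (w k)) Sc"
  define Sv where "Sv = infsum (\<lambda>k. (V k)\<^sup>2 * ennreal (w k)) Sc"
  have lu: "lnorm a p Sc (\<lambda>k. ennreal (cmod (u k))) = ennsqrt Su" by (simp add: lnorm_def Su_def w_def)
  have lv: "lnorm a p Sc V = ennsqrt Sv" by (simp add: lnorm_def Sv_def w_def)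
  have Sufin: "Su \<noteq> top"
  proof
    assume "Su = top"
    then have "ennsqrt Su = top" by (simp add: ennsqrt_def)
    then show False using un lu by (simp add: top_unique)
  qed
  have "ennreal (sqrt (enn2real Su)) \<le> ennreal r"
    using un lu Sufin by (simp add: ennsqrt_def)
  then have "sqrt (enn2real Su) \<le> r" using assms(3) by simp
  then have e2: "enn2real Su \<le> r\<^sup>2" by (simp add: sqrt_le_D)
  have Su_le: "Su \<le> ennreal (r\<^sup>2)"
  proof -
    have "Su = ennreal (enn2real Su)" using Sufin by (simp add: top.not_eq_extremum)
    also have "\<dots> \<le> ennreal (r\<^sup>2)" using e2 by (rule ennreal_leI)
    finally show ?thesis .
  qed
  show ?thesis
  proof (cases "Sv = top")
    case True
    then have "lnorm a p Sc V = top" using lv by (simp add: ennsqrt_def)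
    then show ?thesis using assms(3) by simp
  next
    case Svfin: False
    define A where "A = sqrt (enn2real Sv)"
    have A0: "A \<ge> 0" by (simp add: A_def)
    have lvA: "lnorm a p Sc V = ennreal A" using lv Svfin by (simp add: ennsqrt_def A_def)
    have SvA: "Sv = ennreal (A\<^sup>2)" using Svfin by (simp add: A_def top.not_eq_extremum)
    have Vfin: "V k \<noteq> top" if k: "k \<in> Sc" for k
    proof
      assume "V k = top"
      then have "(V k)\<^sup>2 * ennreal (w k) = top" using w1[of k] by (simp add: power2_eq_square)
      moreover have "(V k)\<^sup>2 * ennreal (w k) \<le> Sv" unfolding Sv_def by (rule enn_term_le[OF k])
      ultimately show False using Svfin by (simp add: top_unique)
    qed
    show ?thesis
    proof (cases "A = 0")
      case True
      have "V k = 0" if k: "k \<in> Sc" for k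
      proof -
        have "(V k)\<^sup>2 * ennreal (w k) \<le> Sv" unfolding Sv_def by (rule enn_term_le[OF k])
        then have "(V k)\<^sup>2 * ennreal (w k) = 0" using SvA True by simp
        then show ?thesis using w1[of k] by simp
      qed
      then have "infsum (\<lambda>k. ennreal (cmod (u k)) * V k) Sc = 0" by (simp add: infsum_0)
      then show ?thesis by simp
    next
      case False
      then have Apos: "A > 0" using A0 by simp
      define c where "c = A / (2 * r)"
      define d where "d = r / (2 * A)"
      have cpos: "c > 0" using Apos assms(3) by (simp add: c_def)
      have dpos: "d > 0" using Apos assms(3) by (simp add: d_def)
      have cd: "4 * c * d = 1" using Apos assms(3) by (simp add: c_def d_def field_simps)
      have pt: "ennreal (cmod (u k)) * V k \<le> ennreal c * ((ennreal (cmod (u k)))\<^sup>2 * ennreal (w k)) + ennreal d * ((V k)\<^sup>2 * ennreal (w k))"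
        if k: "k \<in> Sc" for k
      proof -
        obtain v where v: "V k = ennreal v" "v \<ge> 0" using Vfin[OF k] by (cases "V k") auto
        define x where "x = cmod (u k)"
        have x0: "x \<ge> 0" by (simp add: x_def)
        have wk: "w k \<ge> 1" by (rule w1)
        have key: "c * (4 * (c * x\<^sup>2 + d * v\<^sup>2 - x * v)) = (2 * c * x - v)\<^sup>2"
        proof -
          have "c * (4 * (c * x\<^sup>2 + d * v\<^sup>2 - x * v)) = 4 * c * c * x\<^sup>2 + (4 * c * d) * v\<^sup>2 - 4 * c * x * v"
            by (simp add: algebra_simps)
          also have "\<dots> = (2 * c * x - v)\<^sup>2" using cd by (simp add: power2_eq_square algebra_simps)
          finally show ?thesis .
        qed
        have "0 \<le> c * (4 * (c * x\<^sup>2 + d * v\<^sup>2 - x * v))" by (subst key) simp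
        then have "0 \<le> c * x\<^sup>2 + d * v\<^sup>2 - x * v" using cpos by (simp add: zero_le_mult_iff)
        then have r1: "x * v \<le> c * x\<^sup>2 + d * v\<^sup>2" by simp
        have h1: "x\<^sup>2 \<le> x\<^sup>2 * w k" using wk by (simp add: mult_le_cancel_left1)
        have h2: "v\<^sup>2 \<le> v\<^sup>2 * w k" using wk by (simp add: mult_le_cancel_left1)
        have r2: "c * x\<^sup>2 + d * v\<^sup>2 \<le> c * (x\<^sup>2 * w k) + d * (v\<^sup>2 * w k)"
          using cpos dpos h1 h2 by (intro add_mono mult_left_mono) auto
        have "ennreal (x * v) \<le> ennreal (c * (x\<^sup>2 * w k) + d * (v\<^sup>2 * w k))"
          by (rule ennreal_leI) (rule order_trans[OF r1 r2])
        also have "ennreal (c * (x\<^sup>2 * w k) + d * (v\<^sup>2 * w k)) = ennreal c * ((ennreal x)\<^sup>2 * ennreal (w k)) + ennreal d * ((ennreal v)\<^sup>2 * ennreal (w k))"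
        proof -
          have w0: "0 \<le> w k" using wk by simp
          have p1: "0 \<le> c * (x\<^sup>2 * w k)" using cpos w0 by simp
          have p2: "0 \<le> d * (v\<^sup>2 * w k)" using dpos w0 by simp
          have q1: "ennreal (c * (x\<^sup>2 * w k)) = ennreal c * ((ennreal x)\<^sup>2 * ennreal (w k))"
            using cpos w0 x0 by (simp add: ennreal_mult ennreal_power)
          have q2: "ennreal (d * (v\<^sup>2 * w k)) = ennreal d * ((ennreal v)\<^sup>2 * ennreal (w k))"
            using dpos w0 v(2) by (simp add: ennreal_mult ennreal_power)
          show ?thesis by (subst ennreal_plus[OF p1 p2]) (simp only: q1 q2)
        qed
        finally show ?thesis using v x0 by (simp add: x_def ennreal_mult)
      qed
      have "infsum (\<lambda>k. ennreal (cmod (u k)) * V k) Sc \<le> infsum (\<lambda>k. ennreal c * ((ennreal (cmod (u k)))\<^sup>2 * ennreal (w k)) + ennreal d * ((V k)\<^sup>2 * ennreal (w k))) Sc"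
        by (rule enn_infsum_mono) (rule pt)
      also have "\<dots> = ennreal c * Su + ennreal d * Sv"
        by (simp add: infsum_add enn_infsum_cmult Su_def Sv_def)
      also have "\<dots> \<le> ennreal c * ennreal (r\<^sup>2) + ennreal d * ennreal (A\<^sup>2)"
        using Su_le SvA by (intro add_mono mult_left_mono) auto
      also have "\<dots> = ennreal (c * r\<^sup>2 + d * A\<^sup>2)"
      proof -
        have p1: "0 \<le> c * r\<^sup>2" using cpos by simp
        have p2: "0 \<le> d * A\<^sup>2" using dpos by simp
        show ?thesis using cpos dpos by (subst ennreal_plus[OF p1 p2]) (simp add: ennreal_mult)
      qed
      also have "c * r\<^sup>2 + d * A\<^sup>2 = r * A"
        using Apos assms(3) by (simp add: c_def d_def field_simps power2_eq_square)
      also have "ennreal (r * A) = ennreal r * lnorm a p Sc V"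
        using lvA assms(3) A0 by (simp add: ennreal_mult)
      finally show ?thesis .
    qed
  qed
qed


lemma repackB: fixes F :: "_ \<Rightarrow> _ \<Rightarrow> _ \<Rightarrow> _ \<Rightarrow> ennreal"
  shows "infsum (\<lambda>(\<nu>,i,\<alpha>,\<beta>). F \<nu> i \<alpha> \<beta>) (A \<times> B \<times> C \<times> D)
       = infsum (\<lambda>(\<nu>,i,\<alpha>). infsum (F \<nu> i \<alpha>) D) (A \<times> B \<times> C)"
proof -
  have "infsum (\<lambda>(\<nu>,i,\<alpha>,\<beta>). F \<nu> i \<alpha> \<beta>) (A \<times> B \<times> C \<times> D)
      = infsum (\<lambda>((\<nu>,i,\<alpha>),\<beta>). F \<nu> i \<alpha> \<beta>) ((A \<times> B \<times> C) \<times> D)"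
    by (rule infsum_reindex_bij_witness[of _ "\<lambda>((\<nu>,i,\<alpha>),\<beta>). (\<nu>,i,\<alpha>,\<beta>)" "\<lambda>(\<nu>,i,\<alpha>,\<beta>). ((\<nu>,i,\<alpha>),\<beta>)"]) auto
  also have "\<dots> = infsum (\<lambda>(\<nu>,i,\<alpha>). infsum (F \<nu> i \<alpha>) D) (A \<times> B \<times> C)"
    by (subst ennSigma, rule infsum_cong, clarsimp)
  finally show ?thesis .
qed

lemma repackA: fixes F :: "_ \<Rightarrow> _ \<Rightarrow> _ \<Rightarrow> _ \<Rightarrow> ennreal"
  shows "infsum (\<lambda>(\<nu>,i,\<alpha>,\<beta>). F \<nu> i \<alpha> \<beta>) (A \<times> B \<times> C \<times> D)
       = infsum (\<lambda>(\<nu>,i,\<beta>). infsum (\<lambda>\<alpha>. F \<nu> i \<alpha> \<beta>) C) (A \<times> B \<times> D)"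
proof -
  have "infsum (\<lambda>(\<nu>,i,\<alpha>,\<beta>). F \<nu> i \<alpha> \<beta>) (A \<times> B \<times> C \<times> D)
      = infsum (\<lambda>((\<nu>,i,\<beta>),\<alpha>). F \<nu> i \<alpha> \<beta>) ((A \<times> B \<times> D) \<times> C)"
    by (rule infsum_reindex_bij_witness[of _ "\<lambda>((\<nu>,i,\<beta>),\<alpha>). (\<nu>,i,\<alpha>,\<beta>)" "\<lambda>(\<nu>,i,\<alpha>,\<beta>). ((\<nu>,i,\<beta>),\<alpha>)"]) auto
  also have "\<dots> = infsum (\<lambda>(\<nu>,i,\<beta>). infsum (\<lambda>\<alpha>. F \<nu> i \<alpha> \<beta>) C) (A \<times> B \<times> D)"
    by (subst ennSigma, rule infsum_cong, clarsimp)
  finally show ?thesis .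
qed

lemma maj_eval_zero: "maj_eval s Sc (\<lambda>\<nu> i \<alpha> \<beta>. 0) y z zb = 0"
  unfolding maj_eval_def by (rule infsum_0) auto

lemma lnorm_zero: "lnorm a p Sc (\<lambda>k. 0) = 0"
  unfolding lnorm_def ennsqrt_def by simp

lemma ymono_zero: "ymono_abs y (\<lambda>_. 0) = 1"
  by (simp add: ymono_abs_def)

lemma ennreal_split3:
  assumes "0 \<le> (m::real)" "0 \<le> X"
  shows "ennreal (real n * (m * X)) = of_nat n * ennreal m * ennreal X"
  using assms by (simp add: ennreal_mult ennreal_of_nat_eq_real_of_nat mult.assoc)


definition Tf :: "real \<Rightarrow> (('n::finite \<Rightarrow> int) \<Rightarrow> ('d::finite site \<Rightarrow> nat) \<Rightarrow> ('d site \<Rightarrow> nat) \<Rightarrow> complex)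
   \<Rightarrow> ('n \<Rightarrow> complex) \<Rightarrow> ('d site \<Rightarrow> complex) \<Rightarrow> ('d site \<Rightarrow> complex)
   \<Rightarrow> ('n \<Rightarrow> int) \<Rightarrow> ('n \<Rightarrow> nat) \<Rightarrow> ('d site \<Rightarrow> nat) \<Rightarrow> ('d site \<Rightarrow> nat) \<Rightarrow> ennreal" where
  "Tf s q y z zb \<nu> i \<alpha> \<beta> = ennreal (cmod (if i = (\<lambda>_. 0) then q \<nu> \<alpha> \<beta> else 0) * exp (s * l1int \<nu>)
      * ymono_abs y i * mono_abs z \<alpha> * mono_abs zb \<beta>)"

lemma stepB:
  fixes Sc :: "('d::finite \<Rightarrow> int) set"
    and q :: "('n::finite \<Rightarrow> int) \<Rightarrow> (('d \<Rightarrow> int) \<Rightarrow> nat) \<Rightarrow> (('d \<Rightarrow> int) \<Rightarrow> nat) \<Rightarrow> complex"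
  shows "infsum (\<lambda>(\<nu>,i,\<alpha>,\<beta>). of_nat (mdeg \<beta>) * Tf s q y z zb \<nu> i \<alpha> \<beta>) (UNIV \<times> UNIV \<times> MI Sc \<times> MI Sc)
       = infsum (\<lambda>k. ennreal (cmod (zb k)) * maj_eval s Sc (vz (XQ_w q) k) y z zb) Sc"
proof -
  define G where "G = (\<lambda>k \<nu> (i::'n\<Rightarrow>nat) \<alpha> \<beta>. ennreal (cmod (vz (XQ_w q) k \<nu> i \<alpha> \<beta>) * exp (s * l1int \<nu>)
      * ymono_abs y i * mono_abs z \<alpha> * mono_abs zb \<beta>))"
  have mj: "maj_eval s Sc (vz (XQ_w q) k) y z zb = infsum (\<lambda>(\<nu>,i,\<alpha>). infsum (G k \<nu> i \<alpha>) (MI Sc)) (UNIV \<times> UNIV \<times> MI Sc)" for k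
    unfolding maj_eval_def G_def by (rule repackB)
  have per: "infsum (\<lambda>k. ennreal (cmod (zb k)) * infsum (G k \<nu> i \<alpha>) (MI Sc)) Sc
        = infsum (\<lambda>\<beta>. of_nat (mdeg \<beta>) * Tf s q y z zb \<nu> i \<alpha> \<beta>) (MI Sc)" for \<nu> i \<alpha>
  proof (cases "i = (\<lambda>_. 0)")
    case True
    define h where "h = (\<lambda>\<beta>. ennreal (cmod (q \<nu> \<alpha> \<beta>) * exp (s * l1int \<nu>) * mono_abs z \<alpha>))"
    have X0: "0 \<le> cmod (q \<nu> \<alpha> \<beta>) * exp (s * l1int \<nu>) * mono_abs z \<alpha>" for \<beta>
      by (simp add: mono_abs_nonneg)
    have g: "G k \<nu> i \<alpha> \<beta> = of_nat (\<beta> k + 1) * ennreal (mono_abs zb \<beta>) * h (\<beta>(k := \<beta> k + 1))" for k \<beta>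
    proof -
      have e: "cmod (vz (XQ_w q) k \<nu> i \<alpha> \<beta>) * exp (s * l1int \<nu>) * ymono_abs y i * mono_abs z \<alpha> * mono_abs zb \<beta>
          = real (\<beta> k + 1) * (mono_abs zb \<beta> * (cmod (q \<nu> \<alpha> (\<beta>(k := \<beta> k + 1))) * exp (s * l1int \<nu>) * mono_abs z \<alpha>))"
        using True by (simp add: XQ_w_def norm_mult ymono_zero mult_ac norm_of_nat del: of_nat_Suc)
      show ?thesis unfolding G_def h_def e
        by (rule ennreal_split3[OF mono_abs_nonneg X0])
    qed
    have t: "Tf s q y z zb \<nu> i \<alpha> \<beta> = ennreal (mono_abs zb \<beta>) * h \<beta>" for \<beta>
    proof -
      have e: "cmod (if i = (\<lambda>_. 0) then q \<nu> \<alpha> \<beta> else 0) * exp (s * l1int \<nu>) * ymono_abs y i * mono_abs z \<alpha> * mono_abs zb \<beta>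
          = mono_abs zb \<beta> * (cmod (q \<nu> \<alpha> \<beta>) * exp (s * l1int \<nu>) * mono_abs z \<alpha>)"
        using True by (simp add: ymono_zero mult_ac)
      show ?thesis unfolding Tf_def h_def e
        by (rule ennreal_mult[OF mono_abs_nonneg X0])
    qed
    have gfun: "G k \<nu> i \<alpha> = (\<lambda>\<beta>. of_nat (\<beta> k + 1) * ennreal (mono_abs zb \<beta>) * h (\<beta>(k := \<beta> k + 1)))" for k
      by (rule ext) (rule g)
    show ?thesis
      unfolding gfun euler[of zb h Sc] by (simp add: t mult.assoc)
  next
    case False
    then show ?thesis unfolding G_def Tf_def by (simp add: XQ_w_def)
  qed
  have "infsum (\<lambda>k. ennreal (cmod (zb k)) * maj_eval s Sc (vz (XQ_w q) k) y z zb) Sc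
      = infsum (\<lambda>k. infsum (\<lambda>(\<nu>,i,\<alpha>). ennreal (cmod (zb k)) * infsum (G k \<nu> i \<alpha>) (MI Sc)) (UNIV \<times> UNIV \<times> MI Sc)) Sc"
    unfolding mj by (subst enn_infsum_cmult[symmetric]) (simp add: case_prod_beta')
  also have "\<dots> = infsum (\<lambda>x. infsum (\<lambda>k. (case x of (\<nu>,i,\<alpha>) \<Rightarrow> ennreal (cmod (zb k)) * infsum (G k \<nu> i \<alpha>) (MI Sc))) Sc) (UNIV \<times> UNIV \<times> MI Sc)"
    by (rule ennswap)
  also have "\<dots> = infsum (\<lambda>(\<nu>,i,\<alpha>). infsum (\<lambda>\<beta>. of_nat (mdeg \<beta>) * Tf s q y z zb \<nu> i \<alpha> \<beta>) (MI Sc)) (UNIV \<times> UNIV \<times> MI Sc)"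
    by (rule infsum_cong) (clarsimp simp: per)
  also have "\<dots> = infsum (\<lambda>(\<nu>,i,\<alpha>,\<beta>). of_nat (mdeg \<beta>) * Tf s q y z zb \<nu> i \<alpha> \<beta>) (UNIV \<times> UNIV \<times> MI Sc \<times> MI Sc)"
    by (rule repackB[symmetric])
  finally show ?thesis by simp
qed


lemma stepA:
  fixes Sc :: "('d::finite \<Rightarrow> int) set"
    and q :: "('n::finite \<Rightarrow> int) \<Rightarrow> (('d \<Rightarrow> int) \<Rightarrow> nat) \<Rightarrow> (('d \<Rightarrow> int) \<Rightarrow> nat) \<Rightarrow> complex"
  shows "infsum (\<lambda>(\<nu>,i,\<alpha>,\<beta>). of_nat (mdeg \<alpha>) * Tf s q y z zb \<nu> i \<alpha> \<beta>) (UNIV \<times> UNIV \<times> MI Sc \<times> MI Sc)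
       = infsum (\<lambda>k. ennreal (cmod (z k)) * maj_eval s Sc (vzb (XQ_w q) k) y z zb) Sc"
proof -
  define G where "G = (\<lambda>k \<nu> (i::'n\<Rightarrow>nat) \<beta> \<alpha>. ennreal (cmod (vzb (XQ_w q) k \<nu> i \<alpha> \<beta>) * exp (s * l1int \<nu>)
      * ymono_abs y i * mono_abs z \<alpha> * mono_abs zb \<beta>))"
  have mj: "maj_eval s Sc (vzb (XQ_w q) k) y z zb = infsum (\<lambda>(\<nu>,i,\<beta>). infsum (G k \<nu> i \<beta>) (MI Sc)) (UNIV \<times> UNIV \<times> MI Sc)" for k
    unfolding maj_eval_def G_def by (rule repackA)
  have per: "infsum (\<lambda>k. ennreal (cmod (z k)) * infsum (G k \<nu> i \<beta>) (MI Sc)) Sc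
        = infsum (\<lambda>\<alpha>. of_nat (mdeg \<alpha>) * Tf s q y z zb \<nu> i \<alpha> \<beta>) (MI Sc)" for \<nu> i \<beta>
  proof (cases "i = (\<lambda>_. 0)")
    case True
    define h where "h = (\<lambda>\<alpha>. ennreal (cmod (q \<nu> \<alpha> \<beta>) * exp (s * l1int \<nu>) * mono_abs zb \<beta>))"
    have X0: "0 \<le> cmod (q \<nu> \<alpha> \<beta>) * exp (s * l1int \<nu>) * mono_abs zb \<beta>" for \<alpha>
      by (simp add: mono_abs_nonneg)
    have g: "G k \<nu> i \<beta> \<alpha> = of_nat (\<alpha> k + 1) * ennreal (mono_abs z \<alpha>) * h (\<alpha>(k := \<alpha> k + 1))" for k \<alpha>
    proof -
      have e: "cmod (vzb (XQ_w q) k \<nu> i \<alpha> \<beta>) * exp (s * l1int \<nu>) * ymono_abs y i * mono_abs z \<alpha> * mono_abs zb \<beta>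
          = real (\<alpha> k + 1) * (mono_abs z \<alpha> * (cmod (q \<nu> (\<alpha>(k := \<alpha> k + 1)) \<beta>) * exp (s * l1int \<nu>) * mono_abs zb \<beta>))"
        using True by (simp add: XQ_w_def norm_mult ymono_zero mult_ac norm_of_nat del: of_nat_Suc)
      show ?thesis unfolding G_def h_def e
        by (rule ennreal_split3[OF mono_abs_nonneg X0])
    qed
    have t: "Tf s q y z zb \<nu> i \<alpha> \<beta> = ennreal (mono_abs z \<alpha>) * h \<alpha>" for \<alpha>
    proof -
      have e: "cmod (if i = (\<lambda>_. 0) then q \<nu> \<alpha> \<beta> else 0) * exp (s * l1int \<nu>) * ymono_abs y i * mono_abs z \<alpha> * mono_abs zb \<beta>
          = mono_abs z \<alpha> * (cmod (q \<nu> \<alpha> \<beta>) * exp (s * l1int \<nu>) * mono_abs zb \<beta>)"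
        using True by (simp add: ymono_zero mult_ac)
      show ?thesis unfolding Tf_def h_def e
        by (rule ennreal_mult[OF mono_abs_nonneg X0])
    qed
    have gfun: "G k \<nu> i \<beta> = (\<lambda>\<alpha>. of_nat (\<alpha> k + 1) * ennreal (mono_abs z \<alpha>) * h (\<alpha>(k := \<alpha> k + 1)))" for k
      by (rule ext) (rule g)
    show ?thesis
      unfolding gfun euler[of z h Sc] by (simp add: t mult.assoc)
  next
    case False
    then show ?thesis unfolding G_def Tf_def by (simp add: XQ_w_def)
  qed
  have "infsum (\<lambda>k. ennreal (cmod (z k)) * maj_eval s Sc (vzb (XQ_w q) k) y z zb) Sc
      = infsum (\<lambda>k. infsum (\<lambda>(\<nu>,i,\<beta>). ennreal (cmod (z k)) * infsum (G k \<nu> i \<beta>) (MI Sc)) (UNIV \<times> UNIV \<times> MI Sc)) Sc"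
    unfolding mj by (subst enn_infsum_cmult[symmetric]) (simp add: case_prod_beta')
  also have "\<dots> = infsum (\<lambda>x. infsum (\<lambda>k. (case x of (\<nu>,i,\<beta>) \<Rightarrow> ennreal (cmod (z k)) * infsum (G k \<nu> i \<beta>) (MI Sc))) Sc) (UNIV \<times> UNIV \<times> MI Sc)"
    by (rule ennswap)
  also have "\<dots> = infsum (\<lambda>(\<nu>,i,\<beta>). infsum (\<lambda>\<alpha>. of_nat (mdeg \<alpha>) * Tf s q y z zb \<nu> i \<alpha> \<beta>) (MI Sc)) (UNIV \<times> UNIV \<times> MI Sc)"
    by (rule infsum_cong) (clarsimp simp: per)
  also have "\<dots> = infsum (\<lambda>(\<nu>,i,\<alpha>,\<beta>). of_nat (mdeg \<alpha>) * Tf s q y z zb \<nu> i \<alpha> \<beta>) (UNIV \<times> UNIV \<times> MI Sc \<times> MI Sc)"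
    by (rule repackA[symmetric])
  finally show ?thesis by simp
qed


lemma ptvy:
  "ennreal (cmod (vy (XQ_y q) j \<nu> i \<alpha> \<beta>) * exp (s * l1int \<nu>) * ymono_abs y i * mono_abs z \<alpha> * mono_abs zb \<beta>)
   = ennreal \<bar>real_of_int (\<nu> j)\<bar> * Tf s q y z zb \<nu> i \<alpha> \<beta>"
proof -
  have e: "cmod (vy (XQ_y q) j \<nu> i \<alpha> \<beta>) * exp (s * l1int \<nu>) * ymono_abs y i * mono_abs z \<alpha> * mono_abs zb \<beta>
     = \<bar>real_of_int (\<nu> j)\<bar> * (cmod (if i = (\<lambda>_. 0) then q \<nu> \<alpha> \<beta> else 0) * exp (s * l1int \<nu>) * ymono_abs y i * mono_abs z \<alpha> * mono_abs zb \<beta>)"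
    by (simp add: XQ_y_def norm_mult mult_ac)
  have X0: "0 \<le> cmod (if i = (\<lambda>_. 0) then q \<nu> \<alpha> \<beta> else 0) * exp (s * l1int \<nu>) * ymono_abs y i * mono_abs z \<alpha> * mono_abs zb \<beta>"
    by (simp add: mono_abs_nonneg ymono_abs_def prod_nonneg)
  show ?thesis unfolding e Tf_def by (rule ennreal_mult[OF abs_ge_zero X0])
qed

lemma Tf_zero: "q \<nu> \<alpha> \<beta> = 0 \<Longrightarrow> Tf s q y z zb \<nu> i \<alpha> \<beta> = 0"
  by (simp add: Tf_def)

lemma ptK:
  assumes hq: "q \<nu> \<alpha> \<beta> \<noteq> 0 \<Longrightarrow> l1int \<nu> \<le> real K"
  shows "(\<Sum>j\<in>UNIV. ennreal \<bar>real_of_int (\<nu> j)\<bar> * Tf s q y z zb \<nu> i \<alpha> \<beta>) \<le> of_nat K * Tf s q y z zb \<nu> i \<alpha> \<beta>"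
proof -
  have "(\<Sum>j\<in>UNIV. ennreal \<bar>real_of_int (\<nu> j)\<bar> * Tf s q y z zb \<nu> i \<alpha> \<beta>)
      = (\<Sum>j\<in>UNIV. ennreal \<bar>real_of_int (\<nu> j)\<bar>) * Tf s q y z zb \<nu> i \<alpha> \<beta>"
    by (rule sum_distrib_right[symmetric])
  also have "(\<Sum>j\<in>UNIV. ennreal \<bar>real_of_int (\<nu> j)\<bar>) = ennreal (l1int \<nu>)"
    unfolding l1int_def by (rule sum_ennreal) simp
  finally have eq: "(\<Sum>j\<in>UNIV. ennreal \<bar>real_of_int (\<nu> j)\<bar> * Tf s q y z zb \<nu> i \<alpha> \<beta>) = ennreal (l1int \<nu>) * Tf s q y z zb \<nu> i \<alpha> \<beta>" .
  show ?thesis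
  proof (cases "q \<nu> \<alpha> \<beta> = 0")
    case True
    then show ?thesis by (simp add: Tf_zero)
  next
    case False
    have "ennreal (l1int \<nu>) \<le> ennreal (real K)" using hq[OF False] by (rule ennreal_leI)
    then have "ennreal (l1int \<nu>) \<le> of_nat K" by (simp add: ennreal_of_nat_eq_real_of_nat)
    then show ?thesis unfolding eq by (rule mult_right_mono) simp
  qed
qed

lemma ptD:
  assumes hq: "q \<nu> \<alpha> \<beta> \<noteq> 0 \<Longrightarrow> 1 \<le> mdeg \<alpha> + mdeg \<beta>"
  shows "Tf s q y z zb \<nu> i \<alpha> \<beta> \<le> of_nat (mdeg \<alpha>) * Tf s q y z zb \<nu> i \<alpha> \<beta> + of_nat (mdeg \<beta>) * Tf s q y z zb \<nu> i \<alpha> \<beta>"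
proof (cases "q \<nu> \<alpha> \<beta> = 0")
  case True
  then show ?thesis by (simp add: Tf_zero)
next
  case False
  have h1: "(of_nat 1::ennreal) \<le> of_nat (mdeg \<alpha> + mdeg \<beta>)" by (rule of_nat_mono[OF hq[OF False]])
  then have "(1::ennreal) \<le> of_nat (mdeg \<alpha> + mdeg \<beta>)" by (simp only: of_nat_1)
  then have "1 * Tf s q y z zb \<nu> i \<alpha> \<beta> \<le> of_nat (mdeg \<alpha> + mdeg \<beta>) * Tf s q y z zb \<nu> i \<alpha> \<beta>"
    by (rule mult_right_mono) simp
  then show ?thesis by (simp only: mult_1_left of_nat_add distrib_right)
qed

lemma pointwise:
  fixes Sc :: "('d::finite \<Rightarrow> int) set"
    and q :: "('n::finite \<Rightarrow> int) \<Rightarrow> (('d \<Rightarrow> int) \<Rightarrow> nat) \<Rightarrow> (('d \<Rightarrow> int) \<Rightarrow> nat) \<Rightarrow> complex"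
    and a p s r :: real and K :: nat
  assumes "a \<ge> 0" "p \<ge> 0" "r > 0"
    and hq: "\<And>\<nu> \<alpha> \<beta>. q \<nu> \<alpha> \<beta> \<noteq> 0 \<Longrightarrow>
           l1int \<nu> \<le> real K \<and> \<alpha> \<in> MI Sc \<and> \<beta> \<in> MI Sc \<and> mdeg \<alpha> + mdeg \<beta> \<ge> 1"
    and dz: "lnorm a p Sc (\<lambda>k. ennreal (cmod (z k))) \<le> ennreal r"
    and dzb: "lnorm a p Sc (\<lambda>k. ennreal (cmod (zb k))) \<le> ennreal r"
  shows "(\<Sum>j\<in>UNIV. maj_eval s Sc (vy (XQ_y q) j) y z zb) * ennreal (1 / r\<^sup>2)
     \<le> of_nat K * (lnorm a p Sc (\<lambda>k. maj_eval s Sc (vz (XQ_w q) k) y z zb) * ennreal (1 / r)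
          + lnorm a p Sc (\<lambda>k. maj_eval s Sc (vzb (XQ_w q) k) y z zb) * ennreal (1 / r))"
proof -
  let ?I = "UNIV \<times> UNIV \<times> MI Sc \<times> MI Sc :: (('n\<Rightarrow>int) \<times> ('n\<Rightarrow>nat) \<times> ('d site \<Rightarrow> nat) \<times> ('d site \<Rightarrow> nat)) set"
  define LV where "LV = lnorm a p Sc (\<lambda>k. maj_eval s Sc (vz (XQ_w q) k) y z zb)"
  define LW where "LW = lnorm a p Sc (\<lambda>k. maj_eval s Sc (vzb (XQ_w q) k) y z zb)"
  have vy: "maj_eval s Sc (vy (XQ_y q) j) y z zb
      = infsum (\<lambda>(\<nu>,i,\<alpha>,\<beta>). ennreal \<bar>real_of_int (\<nu> j)\<bar> * Tf s q y z zb \<nu> i \<alpha> \<beta>) ?I" for j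
    unfolding maj_eval_def by (rule infsum_cong) (clarsimp simp: ptvy)
  have "(\<Sum>j\<in>UNIV. maj_eval s Sc (vy (XQ_y q) j) y z zb)
      = infsum (\<lambda>x. \<Sum>j\<in>UNIV. (case x of (\<nu>,i,\<alpha>,\<beta>) \<Rightarrow> ennreal \<bar>real_of_int (\<nu> j)\<bar> * Tf s q y z zb \<nu> i \<alpha> \<beta>)) ?I"
    unfolding vy by (rule enn_infsum_sum[symmetric]) simp
  also have "\<dots> \<le> infsum (\<lambda>x. of_nat K * (case x of (\<nu>,i,\<alpha>,\<beta>) \<Rightarrow> Tf s q y z zb \<nu> i \<alpha> \<beta>)) ?I"
  proof (rule enn_infsum_mono)
    fix x assume "x \<in> ?I"
    obtain \<nu> i \<alpha> \<beta> where x: "x = (\<nu>, i, \<alpha>, \<beta>)" by (cases x) auto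
    have "(\<Sum>j\<in>UNIV. ennreal \<bar>real_of_int (\<nu> j)\<bar> * Tf s q y z zb \<nu> i \<alpha> \<beta>) \<le> of_nat K * Tf s q y z zb \<nu> i \<alpha> \<beta>"
      by (rule ptK) (use hq in blast)
    then show "(\<Sum>j\<in>UNIV. (case x of (\<nu>,i,\<alpha>,\<beta>) \<Rightarrow> ennreal \<bar>real_of_int (\<nu> j)\<bar> * Tf s q y z zb \<nu> i \<alpha> \<beta>))
        \<le> of_nat K * (case x of (\<nu>,i,\<alpha>,\<beta>) \<Rightarrow> Tf s q y z zb \<nu> i \<alpha> \<beta>)" by (simp add: x)
  qed
  also have "\<dots> = of_nat K * infsum (\<lambda>(\<nu>,i,\<alpha>,\<beta>). Tf s q y z zb \<nu> i \<alpha> \<beta>) ?I"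
    by (rule enn_infsum_cmult)
  also have "infsum (\<lambda>(\<nu>,i,\<alpha>,\<beta>). Tf s q y z zb \<nu> i \<alpha> \<beta>) ?I
      \<le> infsum (\<lambda>(\<nu>,i,\<alpha>,\<beta>). of_nat (mdeg \<alpha>) * Tf s q y z zb \<nu> i \<alpha> \<beta>) ?I
       + infsum (\<lambda>(\<nu>,i,\<alpha>,\<beta>). of_nat (mdeg \<beta>) * Tf s q y z zb \<nu> i \<alpha> \<beta>) ?I"
  proof -
    have "infsum (\<lambda>(\<nu>,i,\<alpha>,\<beta>). Tf s q y z zb \<nu> i \<alpha> \<beta>) ?I
      \<le> infsum (\<lambda>x. (case x of (\<nu>,i,\<alpha>,\<beta>) \<Rightarrow> of_nat (mdeg \<alpha>) * Tf s q y z zb \<nu> i \<alpha> \<beta>)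
            + (case x of (\<nu>,i,\<alpha>,\<beta>) \<Rightarrow> of_nat (mdeg \<beta>) * Tf s q y z zb \<nu> i \<alpha> \<beta>)) ?I"
    proof (rule enn_infsum_mono)
      fix x assume "x \<in> ?I"
      obtain \<nu> i \<alpha> \<beta> where x: "x = (\<nu>, i, \<alpha>, \<beta>)" by (cases x) auto
      have "Tf s q y z zb \<nu> i \<alpha> \<beta> \<le> of_nat (mdeg \<alpha>) * Tf s q y z zb \<nu> i \<alpha> \<beta> + of_nat (mdeg \<beta>) * Tf s q y z zb \<nu> i \<alpha> \<beta>"
        by (rule ptD) (use hq in blast)
      then show "(case x of (\<nu>,i,\<alpha>,\<beta>) \<Rightarrow> Tf s q y z zb \<nu> i \<alpha> \<beta>) \<le> (case x of (\<nu>,i,\<alpha>,\<beta>) \<Rightarrow> of_nat (mdeg \<alpha>) * Tf s q y z zb \<nu> i \<alpha> \<beta>)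
            + (case x of (\<nu>,i,\<alpha>,\<beta>) \<Rightarrow> of_nat (mdeg \<beta>) * Tf s q y z zb \<nu> i \<alpha> \<beta>)" by (simp add: x)
    qed
    also have "\<dots> = infsum (\<lambda>(\<nu>,i,\<alpha>,\<beta>). of_nat (mdeg \<alpha>) * Tf s q y z zb \<nu> i \<alpha> \<beta>) ?I
       + infsum (\<lambda>(\<nu>,i,\<alpha>,\<beta>). of_nat (mdeg \<beta>) * Tf s q y z zb \<nu> i \<alpha> \<beta>) ?I"
      by (rule infsum_add) simp_all
    finally show ?thesis .
  qed
  also have "infsum (\<lambda>(\<nu>,i,\<alpha>,\<beta>). of_nat (mdeg \<alpha>) * Tf s q y z zb \<nu> i \<alpha> \<beta>) ?I \<le> ennreal r * LW"
    unfolding stepA LW_def by (rule amgm[OF assms(1,2,3) dz])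
  also have "infsum (\<lambda>(\<nu>,i,\<alpha>,\<beta>). of_nat (mdeg \<beta>) * Tf s q y z zb \<nu> i \<alpha> \<beta>) ?I \<le> ennreal r * LV"
    unfolding stepB LV_def by (rule amgm[OF assms(1,2,3) dzb])
  finally have main: "(\<Sum>j\<in>UNIV. maj_eval s Sc (vy (XQ_y q) j) y z zb) \<le> of_nat K * (ennreal r * LW + ennreal r * LV)"
    by (simp add: mult_left_mono add_mono)
  have rr: "ennreal r * ennreal (1 / r\<^sup>2) = ennreal (1 / r)"
    using assms(3) by (simp add: ennreal_mult[symmetric] power2_eq_square)
  have "(\<Sum>j\<in>UNIV. maj_eval s Sc (vy (XQ_y q) j) y z zb) * ennreal (1 / r\<^sup>2)
      \<le> of_nat K * (ennreal r * LW + ennreal r * LV) * ennreal (1 / r\<^sup>2)"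
    using main by (rule mult_right_mono) simp
  also have "\<dots> = of_nat K * (LV * (ennreal r * ennreal (1 / r\<^sup>2)) + LW * (ennreal r * ennreal (1 / r\<^sup>2)))"
    by (simp add: algebra_simps)
  also have "\<dots> = of_nat K * (LV * ennreal (1 / r) + LW * ennreal (1 / r))"
    by (simp only: rr)
  finally show ?thesis unfolding LV_def LW_def .
qed


theorem lemmaA6:
  fixes Sc :: "('d::finite \<Rightarrow> int) set"
    and q :: "('n::finite \<Rightarrow> int) \<Rightarrow> (('d \<Rightarrow> int) \<Rightarrow> nat) \<Rightarrow> (('d \<Rightarrow> int) \<Rightarrow> nat) \<Rightarrow> complex"
    and a p s r :: real and K :: nat
  assumes "a \<ge> 0" "p \<ge> 0" "s > 0" "r > 0" "K \<ge> 1"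
    and "\<And>\<nu> \<alpha> \<beta>. q \<nu> \<alpha> \<beta> \<noteq> 0 \<Longrightarrow>
           l1int \<nu> \<le> real K \<and> \<alpha> \<in> MI Sc \<and> \<beta> \<in> MI Sc \<and> mdeg \<alpha> + mdeg \<beta> \<ge> 1"
  shows "vf_norm a p s r Sc (XQ_y q) \<le> of_nat K * vf_norm a p s r Sc (XQ_w q)"
proof -
  have vxy: "vx (XQ_y q) = (\<lambda>j \<nu> i \<alpha> \<beta>. 0)" by (simp add: XQ_y_def)
  have vzy: "vz (XQ_y q) = (\<lambda>j \<nu> i \<alpha> \<beta>. 0)" by (simp add: XQ_y_def)
  have vzby: "vzb (XQ_y q) = (\<lambda>j \<nu> i \<alpha> \<beta>. 0)" by (simp add: XQ_y_def)
  have vxw: "vx (XQ_w q) = (\<lambda>j \<nu> i \<alpha> \<beta>. 0)" by (simp add: XQ_w_def)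
  have vyw: "vy (XQ_w q) = (\<lambda>j \<nu> i \<alpha> \<beta>. 0)" by (simp add: XQ_w_def)
  show ?thesis
    unfolding vf_norm_def
  proof (rule SUP_least)
    fix x :: "('n \<Rightarrow> complex) \<times> ('d site \<Rightarrow> complex) \<times> ('d site \<Rightarrow> complex)"
    assume xD: "x \<in> Dom a p r Sc"
    obtain y z zb where x: "x = (y, z, zb)" by (cases x) auto
    have dz: "lnorm a p Sc (\<lambda>k. ennreal (cmod (z k))) \<le> ennreal r"
      and dzb: "lnorm a p Sc (\<lambda>k. ennreal (cmod (zb k))) \<le> ennreal r"
      using xD x by (auto simp: Dom_def)
    let ?Fw = "\<lambda>(y, z, zb). (SUP j. maj_eval s Sc (vx (XQ_w q) j) y z zb) * ennreal (1 / s)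
      + (\<Sum>j\<in>UNIV. maj_eval s Sc (vy (XQ_w q) j) y z zb) * ennreal (1 / r\<^sup>2)
      + lnorm a p Sc (\<lambda>k. maj_eval s Sc (vz (XQ_w q) k) y z zb) * ennreal (1 / r)
      + lnorm a p Sc (\<lambda>k. maj_eval s Sc (vzb (XQ_w q) k) y z zb) * ennreal (1 / r)"
    have "(case x of (y, z, zb) \<Rightarrow> (SUP j. maj_eval s Sc (vx (XQ_y q) j) y z zb) * ennreal (1 / s)
      + (\<Sum>j\<in>UNIV. maj_eval s Sc (vy (XQ_y q) j) y z zb) * ennreal (1 / r\<^sup>2)
      + lnorm a p Sc (\<lambda>k. maj_eval s Sc (vz (XQ_y q) k) y z zb) * ennreal (1 / r)
      + lnorm a p Sc (\<lambda>k. maj_eval s Sc (vzb (XQ_y q) k) y z zb) * ennreal (1 / r))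
      = (\<Sum>j\<in>UNIV. maj_eval s Sc (vy (XQ_y q) j) y z zb) * ennreal (1 / r\<^sup>2)"
      unfolding x vxy vzy vzby by (simp add: maj_eval_zero lnorm_zero)
    also have "\<dots> \<le> of_nat K * (lnorm a p Sc (\<lambda>k. maj_eval s Sc (vz (XQ_w q) k) y z zb) * ennreal (1 / r)
          + lnorm a p Sc (\<lambda>k. maj_eval s Sc (vzb (XQ_w q) k) y z zb) * ennreal (1 / r))"
      by (rule pointwise[OF assms(1,2,4) assms(6) dz dzb])
    also have "of_nat K * (lnorm a p Sc (\<lambda>k. maj_eval s Sc (vz (XQ_w q) k) y z zb) * ennreal (1 / r)
          + lnorm a p Sc (\<lambda>k. maj_eval s Sc (vzb (XQ_w q) k) y z zb) * ennreal (1 / r)) = of_nat K * ?Fw x"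
      unfolding x vxw vyw by (simp add: maj_eval_zero add.assoc)
    also have "of_nat K * ?Fw x \<le> of_nat K * (SUP x\<in>Dom a p r Sc. ?Fw x)"
      by (rule mult_left_mono[OF SUP_upper[OF xD]]) simp
    finally show "(case x of (y, z, zb) \<Rightarrow> (SUP j. maj_eval s Sc (vx (XQ_y q) j) y z zb) * ennreal (1 / s)
      + (\<Sum>j\<in>UNIV. maj_eval s Sc (vy (XQ_y q) j) y z zb) * ennreal (1 / r\<^sup>2)
      + lnorm a p Sc (\<lambda>k. maj_eval s Sc (vz (XQ_y q) k) y z zb) * ennreal (1 / r)
      + lnorm a p Sc (\<lambda>k. maj_eval s Sc (vzb (XQ_y q) k) y z zb) * ennreal (1 / r))
      \<le> of_nat K * (SUP x\<in>Dom a p r Sc. ?Fw x)" .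
  qed
qed

end
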